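(* Let $J$ be the transformation $J:(u,v)(z)\mapsto(-\overline{u(\bar z)},\overline{v(\bar z)})$, which maps solutions of (L) to solutions of (L), and let $J_*f$ denote the image of a vector function $f$. Let $f_{j\pm}$, $j=1,2$, denote the $j$-th column of $W_\pm$. Then $J_*f_{2\pm}=f_{2\mp}$ in general, and $J_*f_{1\pm}=-f_{1\mp}$ whenever $l\in\mathbb Z$.
   Context: Let $\omega>0$, $l\ge0$ real, $\mu>0$. System (L): $u'=z^{-2}\big(-(lz+\mu(1+z^2))u+\frac{z}{2i\omega}v\big)$, $v'=\frac{1}{2i\omega z}u$. $F(z)=\operatorname{diag}(z^{-l}e^{\mu(1/z-z)},1)$. $S_+$ (resp. $S_-$) is a sector with vertex $0$ containing the closed upper (resp. lower) half-plane minus $0$ whose closure avoids $i\mathbb R_-$ (resp. $i\mathbb R_+$), $S_-=\overline{S_+}$. $H_\pm$ are the unique invertible matrix functions holomorphic on $S_\pm$, $C^\infty$ on $\overline{S_\pm}\setminus\{\infty\}$, $H_\pm(0)=\mathrm{Id}$, such that $w=H_\pm\tilde w$ transforms (L) into $\tilde u'=-z^{-2}(lz+\mu(1+z^2))\tilde u$, $\tilde v'=0$. The canonical sectorial fundamental matrices are $W_\pm=H_\pm F$, with the branch of $F$ on $S_-$ obtained by counterclockwise continuation from $S_+$. *)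

theory Defs
  imports "HOL-Analysis.Analysis"
begin

text \<open>Coefficient matrix of system (L): w' = A(z) w, w = (u,v).\<close>
definition sysA :: "real \<Rightarrow> real \<Rightarrow> real \<Rightarrow> complex \<Rightarrow> complex^2^2" where
  "sysA l mu omega z =
     vector [vector [- (of_real l * z + of_real mu * (1 + z^2)) / z^2,
                     1 / (2 * \<i> * of_real omega * z)],
             vector [1 / (2 * \<i> * of_real omega * z), 0]]"

text \<open>Coefficient matrix of the diagonal (formal normal form) system.\<close>
definition sysB :: "real \<Rightarrow> real \<Rightarrow> complex \<Rightarrow> complex^2^2" where
  "sysB l mu z =
     vector [vector [- (of_real l * z + of_real mu * (1 + z^2)) / z^2, 0],
             vector [0, 0]]"

text \<open>With 0<a,b<pi/2 these are
  exactly the open sectors containing the closed upper half-plane minus 0 whose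
  closure avoids the negative imaginary axis.\<close>
definition upper_sector :: "real \<Rightarrow> real \<Rightarrow> complex set" where
  "upper_sector a b = {z. z \<noteq> 0 \<and> (\<exists>t. - a < t \<and> t < pi + b \<and> z = of_real (cmod z) * cis t)}"

text \<open>C-infinity up to the boundary (on the closure, which contains 0) of a function
  holomorphic on S: every complex derivative extends continuously to closure S.\<close>
definition smooth_to_closure :: "complex set \<Rightarrow> (complex \<Rightarrow> complex) \<Rightarrow> bool" where
  "smooth_to_closure S h \<longleftrightarrow>
     (\<forall>n. \<forall>z0\<in>closure S. \<exists>L. ((deriv ^^ n) h \<longlongrightarrow> L) (at z0 within S))"

text \<open>H is a normalising gauge transformation on S: w = H w~ transforms (L) into the
  diagonal system, i.e. H' = A H - H B on S; H invertible and holomorphic on S,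
  smooth up to the boundary, H(0) = Id.\<close>
definition is_normalizing_H ::
  "real \<Rightarrow> real \<Rightarrow> real \<Rightarrow> complex set \<Rightarrow> (complex \<Rightarrow> complex^2^2) \<Rightarrow> bool" where
  "is_normalizing_H l mu omega S H \<longleftrightarrow>
     (\<forall>z\<in>S. invertible (H z)) \<and>
     (\<forall>i j. (\<lambda>z. H z $ i $ j) holomorphic_on S \<and> smooth_to_closure S (\<lambda>z. H z $ i $ j)) \<and>
     (H \<longlongrightarrow> mat 1) (at 0 within S) \<and>
     (\<forall>z\<in>S. \<forall>i j. ((\<lambda>x. H x $ i $ j) has_field_derivative
                        ((sysA l mu omega z ** H z - H z ** sysB l mu z) $ i $ j)) (at z))"

text \<open>Branches of log z: on S+ (directions in (-pi/2, 3pi/2]) and on S- obtained by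
  counterclockwise continuation from S+ (directions in (pi/2, 5pi/2]).\<close>
definition log_plus :: "complex \<Rightarrow> complex" where
  "log_plus z = Ln (- \<i> * z) + \<i> * of_real (pi / 2)"

definition log_minus :: "complex \<Rightarrow> complex" where
  "log_minus z = Ln (\<i> * z) + \<i> * of_real (3 * pi / 2)"

text \<open>(1,1) entry of F: z^(-l) e^(mu(1/z - z)), with the branch of log given by lg.\<close>
definition F11 :: "real \<Rightarrow> real \<Rightarrow> (complex \<Rightarrow> complex) \<Rightarrow> complex \<Rightarrow> complex" where
  "F11 l mu lg z = exp (- of_real l * lg z) * exp (of_real mu * (1 / z - z))"

text \<open>Columns of W = H F, as vector functions (u,v).\<close>
definition col1 :: "real \<Rightarrow> real \<Rightarrow> (complex \<Rightarrow> complex) \<Rightarrow> (complex \<Rightarrow> complex^2^2)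
                    \<Rightarrow> complex \<Rightarrow> complex \<times> complex" where
  "col1 l mu lg H z = (H z $ 1 $ 1 * F11 l mu lg z, H z $ 2 $ 1 * F11 l mu lg z)"

definition col2 :: "(complex \<Rightarrow> complex^2^2) \<Rightarrow> complex \<Rightarrow> complex \<times> complex" where
  "col2 H z = (H z $ 1 $ 2, H z $ 2 $ 2)"

definition Jstar :: "(complex \<Rightarrow> complex \<times> complex) \<Rightarrow> complex \<Rightarrow> complex \<times> complex" where
  "Jstar f z = (- cnj (fst (f (cnj z))), cnj (snd (f (cnj z))))"

end

theory Submission
  imports Defs "HOL-Complex_Analysis.Complex_Analysis" "HOL-Real_Asymp.Real_Asymp"
begin

lemma sector_exp:
  "upper_sector a b = exp ` {w. - a < Im w \<and> Im w < pi + b}"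
proof
  show "upper_sector a b \<subseteq> exp ` {w. - a < Im w \<and> Im w < pi + b}"
  proof
    fix z assume "z \<in> upper_sector a b"
    then obtain t where z: "z \<noteq> 0" "- a < t" "t < pi + b" "z = of_real (cmod z) * cis t"
      unfolding upper_sector_def by blast
    have "exp (Complex (ln (cmod z)) t) = z"
      using z by (simp add: exp_eq_polar)
    then show "z \<in> exp ` {w. - a < Im w \<and> Im w < pi + b}"
      using z by (intro rev_image_eqI[of "Complex (ln (cmod z)) t"]) auto
  qed
next
  show "exp ` {w. - a < Im w \<and> Im w < pi + b} \<subseteq> upper_sector a b"
  proof
    fix z assume "z \<in> exp ` {w. - a < Im w \<and> Im w < pi + b}"
    then obtain w where w: "- a < Im w" "Im w < pi + b" "z = exp w" by blast
    have "cmod z = exp (Re w)" using w by (simp add: norm_exp_eq_Re)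
    then have "z = of_real (cmod z) * cis (Im w)" using w by (simp add: exp_eq_polar)
    moreover have "z \<noteq> 0" using w by simp
    ultimately show "z \<in> upper_sector a b" unfolding upper_sector_def using w by blast
  qed
qed

lemma sector_open: "open (upper_sector a b)"
proof -
  let ?U = "{w. - a < Im w \<and> Im w < pi + b}"
  have oU: "open ?U"
    by (intro open_Collect_conj open_Collect_less continuous_intros)
  have e1: "exp (1::complex) = of_real (exp 1)" by (metis exp_of_real of_real_1)
  have ne: "exp (1::complex) \<noteq> exp 0" unfolding e1 by simp
  have "\<not> (exp::complex\<Rightarrow>complex) constant_on UNIV"
    unfolding constant_on_def by (metis UNIV_I ne)
  then have "open (exp ` ?U)"
    by (intro open_mapping_thm[where S=UNIV]) (auto intro: holomorphic_intros oU)
  then show ?thesis by (simp add: sector_exp)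
qed

lemma sector_connected: "connected (upper_sector a b)"
proof -
  let ?U = "{w. - a < Im w \<and> Im w < pi + b}"
  have "?U = {w. Im w > - a} \<inter> {w. Im w < pi + b}" by auto
  then have "convex ?U"
    by (metis convex_Int convex_halfspace_Im_gt convex_halfspace_Im_lt)
  then have "connected ?U" by (rule convex_connected)
  then show ?thesis unfolding sector_exp
    by (intro connected_continuous_image continuous_intros)
qed

lemma sector_pos: assumes "0 < a" "0 < b" "t > 0" shows "complex_of_real t \<in> upper_sector a b"
proof -
  have "0 < pi" by (rule pi_gt_zero)
  then have "- a < 0" "0 < pi + b" using assms by linarith+
  then show ?thesis unfolding upper_sector_def using assms by (auto intro!: exI[of _ 0])
qed

lemma sector_neg: assumes "0 < a" "0 < b" "t > 0" shows "- complex_of_real t \<in> upper_sector a b"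
proof -
  have "0 < pi" by (rule pi_gt_zero)
  then have "- a < pi" using assms by linarith
  then show ?thesis unfolding upper_sector_def using assms by (auto intro!: exI[of _ pi])
qed

lemma sector_nonpos: assumes "a < pi/2" "b < pi/2" "z \<in> upper_sector a b"
  shows "- \<i> * z \<notin> \<real>\<^sub>\<le>\<^sub>0"
proof
  assume h: "- \<i> * z \<in> \<real>\<^sub>\<le>\<^sub>0"
  from assms obtain t where z: "z \<noteq> 0" "- a < t" "t < pi + b" "z = of_real (cmod z) * cis t"
    unfolding upper_sector_def by blast
  have r: "cmod z > 0" using z by simp
  from h have "Re z = 0" "Im z \<le> 0" by (auto simp: complex_nonpos_Reals_iff)
  moreover have "Re z = cmod z * cos t" "Im z = cmod z * sin t"
    using arg_cong[OF z(4), of Re] arg_cong[OF z(4), of Im] by simp_all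
  ultimately have c: "cos t = 0" and s: "sin t \<le> 0" using r
    by (auto simp: mult_le_0_iff)
  show False
  proof (cases "t \<le> 0")
    case True
    then have "cos t > 0" using z assms by (intro cos_gt_zero_pi) auto
    then show False using c by simp
  next
    case False
    show False
    proof (cases "t < pi")
      case True
      then have "sin t > 0" using False by (intro sin_gt_zero) auto
      then show False using s by simp
    next
      case False
      have "cos (t - pi) > 0" using False z assms by (intro cos_gt_zero_pi) auto
      then show False using c by (simp add: cos_diff)
    qed
  qed
qed

definition alph :: "real \<Rightarrow> real \<Rightarrow> complex \<Rightarrow> complex" where
  "alph l mu z = - (of_real l * z + of_real mu * (1 + z^2)) / z^2"
definition cc :: "real \<Rightarrow> complex \<Rightarrow> complex" where
  "cc omega z = 1 / (2 * \<i> * of_real omega * z)"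
definition phi :: "real \<Rightarrow> real \<Rightarrow> complex \<Rightarrow> complex" where
  "phi l mu z = - of_real l * log_plus z + of_real mu / z - of_real mu * z"

lemma filt_pos: assumes "0 < a" "0 < b"
  shows "filterlim (\<lambda>t. complex_of_real t) (at 0 within upper_sector a b) (at_right 0)"
proof (rule filterlim_at_withinI)
  show "((\<lambda>t. complex_of_real t) \<longlongrightarrow> 0) (at_right 0)"
    using tendsto_of_real[OF tendsto_ident_at[of "0::real" "{0<..}"]] by simp
  show "\<forall>\<^sub>F t in at_right 0. complex_of_real t \<in> upper_sector a b - {0}"
    using eventually_at_right_less[of "0::real"]
    by eventually_elim (use sector_pos[OF assms] in auto)
qed

lemma filt_neg: assumes "0 < a" "0 < b"
  shows "filterlim (\<lambda>t. - complex_of_real t) (at 0 within upper_sector a b) (at_right 0)"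
proof (rule filterlim_at_withinI)
  show "((\<lambda>t. - complex_of_real t) \<longlongrightarrow> 0) (at_right 0)"
    using tendsto_minus[OF tendsto_of_real[OF tendsto_ident_at[of "0::real" "{0<..}"]]] by simp
  show "\<forall>\<^sub>F t in at_right 0. - complex_of_real t \<in> upper_sector a b - {0}"
    using eventually_at_right_less[of "0::real"]
    by eventually_elim (use sector_neg[OF assms] in auto)
qed

lemma const_right:
  fixes f :: "real \<Rightarrow> 'a::t2_space"
  assumes "\<And>t. t > 0 \<Longrightarrow> f t = c" and "(f \<longlongrightarrow> L) (at_right (0::real))"
  shows "c = L"
proof -
  have ev: "eventually (\<lambda>t. f t = c) (at_right (0::real))"
    using eventually_at_right_less[of "0::real"] by (rule eventually_mono) (simp add: assms(1))
  have "((\<lambda>_. c) \<longlongrightarrow> L) (at_right (0::real))"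
    using assms(2) tendsto_cong[of f "\<lambda>_. c", OF ev] by simp
  then show ?thesis by (metis tendsto_unique trivial_limit_at_right_real tendsto_const)
qed

lemma deriv_log_plus: assumes "a < pi/2" "b < pi/2" "z \<in> upper_sector a b"
  shows "(log_plus has_field_derivative 1 / z) (at z)"
proof -
  have z: "z \<noteq> 0" using assms(3) unfolding upper_sector_def by auto
  have "((\<lambda>x. Ln (- \<i> * x) + \<i> * of_real (pi/2)) has_field_derivative inverse (- \<i> * z) * (- \<i>) + 0) (at z)"
    by (intro DERIV_add DERIV_chain2[where f=Ln and g="\<lambda>x. - \<i> * x", OF has_field_derivative_Ln[OF sector_nonpos[OF assms]]])
       (auto intro!: derivative_eq_intros)
  moreover have "inverse (- \<i> * z) * (- \<i>) + 0 = 1 / z" using z by (simp add: field_simps)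
  ultimately show ?thesis unfolding log_plus_def[abs_def] by simp
qed

lemma deriv_phi: assumes "a < pi/2" "b < pi/2" "z \<in> upper_sector a b"
  shows "(phi l mu has_field_derivative alph l mu z) (at z)"
proof -
  have z: "z \<noteq> 0" using assms(3) unfolding upper_sector_def by auto
  have "(phi l mu has_field_derivative (- of_real l * (1/z) + (- of_real mu / z^2) - of_real mu)) (at z)"
    unfolding phi_def[abs_def] using z
    by (auto intro!: derivative_eq_intros deriv_log_plus[OF assms] simp: power2_eq_square field_simps)
  moreover have "- of_real l * (1/z) + (- of_real mu / z^2) - of_real mu = alph l mu z"
    using z unfolding alph_def by (simp add: field_simps power2_eq_square)
  ultimately show ?thesis by simp
qed

lemma Re_log_plus: "z \<noteq> 0 \<Longrightarrow> Re (log_plus z) = ln (cmod z)"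
  unfolding log_plus_def by (simp add: norm_mult)

lemma zero_deriv_lim:
  fixes f :: "complex \<Rightarrow> complex"
  assumes a: "0<a" "0<b"
    and d: "\<And>z. z \<in> upper_sector a b \<Longrightarrow> (f has_field_derivative 0) (at z)"
    and lim: "(f \<longlongrightarrow> L) (at 0 within upper_sector a b)"
    and z: "z \<in> upper_sector a b"
  shows "f z = L"
proof -
  have "f constant_on upper_sector a b"
    using d sector_connected sector_open by (rule has_field_derivative_0_imp_constant_on)
  then obtain c where c: "\<And>z. z \<in> upper_sector a b \<Longrightarrow> f z = c" unfolding constant_on_def by blast
  have LL: "((\<lambda>t. f (of_real t)) \<longlongrightarrow> L) (at_right 0)"
    using filterlim_compose[OF lim filt_pos[OF a]] by simp
  have EE: "\<And>t. t > 0 \<Longrightarrow> f (of_real t) = c" by (intro c sector_pos[OF a])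
  have "c = L" by (rule const_right[OF EE LL])
  then show ?thesis using c z by simp
qed

lemma norm_exp_phi_pos:
  assumes "t > 0"
  shows "norm (exp (- phi l mu (of_real t))) = exp (l * ln t - mu / t + mu * t)"
  using assms by (simp add: phi_def norm_exp_eq_Re Re_log_plus)

lemma norm_exp_phi_neg:
  assumes "t > 0"
  shows "norm (exp (phi l mu (- of_real t))) = exp (- l * ln t - mu / t + mu * t)"
  using assms by (simp add: phi_def norm_exp_eq_Re Re_log_plus)

lemma ode_zero1:
  fixes g :: "complex \<Rightarrow> complex"
  assumes a: "0<a" "a<pi/2" "0<b" "b<pi/2" and l: "l \<ge> 0" and mu: "mu > 0"
    and d: "\<And>z. z \<in> upper_sector a b \<Longrightarrow> (g has_field_derivative alph l mu z * g z) (at z)"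
    and lim: "(g \<longlongrightarrow> 0) (at 0 within upper_sector a b)"
    and z: "z \<in> upper_sector a b"
  shows "g z = 0"
proof -
  define psi where "psi = (\<lambda>x. g x * exp (- phi l mu x))"
  have dpsi: "(psi has_field_derivative 0) (at x)" if x: "x \<in> upper_sector a b" for x
  proof -
    have e: "((\<lambda>x. exp (- phi l mu x)) has_field_derivative exp (- phi l mu x) * (- alph l mu x)) (at x)"
      by (rule DERIV_chain2[where f=exp and g="\<lambda>x. - phi l mu x", OF DERIV_exp DERIV_minus[OF deriv_phi[OF a(2,4) x]]])
    from DERIV_mult[OF d[OF x] e] show ?thesis unfolding psi_def by (rule DERIV_cong) (simp add: algebra_simps)
  qed
  have "psi constant_on upper_sector a b"
    using dpsi sector_connected sector_open by (rule has_field_derivative_0_imp_constant_on)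
  then obtain c where c: "\<And>z. z \<in> upper_sector a b \<Longrightarrow> psi z = c" unfolding constant_on_def by blast
  have g0: "((\<lambda>t. g (of_real t)) \<longlongrightarrow> 0) (at_right 0)"
    using filterlim_compose[OF lim filt_pos[OF a(1,3)]] by simp
  have lim1: "((\<lambda>t. exp (l * ln t - mu / t + mu * t)) \<longlongrightarrow> 0) (at_right 0)"
    using mu l by real_asymp
  have ev: "eventually (\<lambda>t. exp (l * ln t - mu / t + mu * t) = norm (exp (- phi l mu (of_real t)))) (at_right (0::real))"
    using eventually_at_right_less[of "0::real"] by (rule eventually_mono) (simp only: norm_exp_phi_pos)
  have "((\<lambda>t. norm (exp (- phi l mu (of_real t)))) \<longlongrightarrow> 0) (at_right 0)"
    using lim1 by (rule tendsto_cong[OF ev, THEN iffD1])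
  then have e0: "((\<lambda>t. exp (- phi l mu (of_real t))) \<longlongrightarrow> 0) (at_right 0)"
    by (rule tendsto_norm_zero_cancel)
  have LL: "((\<lambda>t. psi (of_real t)) \<longlongrightarrow> 0) (at_right 0)"
    unfolding psi_def using tendsto_mult[OF g0 e0] by simp
  have EE: "\<And>t. t > 0 \<Longrightarrow> psi (of_real t) = c" by (intro c sector_pos[OF a(1,3)])
  have "c = 0" by (rule const_right[OF EE LL])
  then have "psi z = 0" using c z by simp
  then show ?thesis unfolding psi_def by simp
qed

lemma ode_zero2:
  fixes g :: "complex \<Rightarrow> complex"
  assumes a: "0<a" "a<pi/2" "0<b" "b<pi/2" and l: "l \<ge> 0" and mu: "mu > 0"
    and d: "\<And>z. z \<in> upper_sector a b \<Longrightarrow> (g has_field_derivative - alph l mu z * g z) (at z)"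
    and lim: "(g \<longlongrightarrow> 0) (at 0 within upper_sector a b)"
    and z: "z \<in> upper_sector a b"
  shows "g z = 0"
proof -
  define psi where "psi = (\<lambda>x. g x * exp (phi l mu x))"
  have dpsi: "(psi has_field_derivative 0) (at x)" if x: "x \<in> upper_sector a b" for x
  proof -
    have e: "((\<lambda>x. exp (phi l mu x)) has_field_derivative exp (phi l mu x) * (alph l mu x)) (at x)"
      by (rule DERIV_chain2[where f=exp and g="\<lambda>x. phi l mu x", OF DERIV_exp deriv_phi[OF a(2,4) x]])
    from DERIV_mult[OF d[OF x] e] show ?thesis unfolding psi_def by (rule DERIV_cong) (simp add: algebra_simps)
  qed
  have "psi constant_on upper_sector a b"
    using dpsi sector_connected sector_open by (rule has_field_derivative_0_imp_constant_on)
  then obtain c where c: "\<And>z. z \<in> upper_sector a b \<Longrightarrow> psi z = c" unfolding constant_on_def by blast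
  have g0: "((\<lambda>t. g (- of_real t)) \<longlongrightarrow> 0) (at_right 0)"
    using filterlim_compose[OF lim filt_neg[OF a(1,3)]] by simp
  have lim1: "((\<lambda>t. exp (- l * ln t - mu / t + mu * t)) \<longlongrightarrow> 0) (at_right 0)"
    using mu l by real_asymp
  have ev: "eventually (\<lambda>t. exp (- l * ln t - mu / t + mu * t) = norm (exp (phi l mu (- of_real t)))) (at_right (0::real))"
    using eventually_at_right_less[of "0::real"] by (rule eventually_mono) (simp only: norm_exp_phi_neg)
  have "((\<lambda>t. norm (exp (phi l mu (- of_real t)))) \<longlongrightarrow> 0) (at_right 0)"
    using lim1 by (rule tendsto_cong[OF ev, THEN iffD1])
  then have e0: "((\<lambda>t. exp (phi l mu (- of_real t))) \<longlongrightarrow> 0) (at_right 0)"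
    by (rule tendsto_norm_zero_cancel)
  have LL: "((\<lambda>t. psi (- of_real t)) \<longlongrightarrow> 0) (at_right 0)"
    unfolding psi_def using tendsto_mult[OF g0 e0] by simp
  have EE: "\<And>t. t > 0 \<Longrightarrow> psi (- of_real t) = c" by (intro c sector_neg[OF a(1,3)])
  have "c = 0" by (rule const_right[of "\<lambda>t. psi (- of_real t)", OF EE LL])
  then have "psi z = 0" using c z by simp
  then show ?thesis unfolding psi_def by simp
qed

lemma uniq_scalar:
  fixes p q r s P Q R T :: "complex \<Rightarrow> complex"
  assumes a: "0<a" "a<pi/2" "0<b" "b<pi/2" and l: "l \<ge> 0" and mu: "mu > 0"
    and dp: "\<And>z. z \<in> upper_sector a b \<Longrightarrow> (p has_field_derivative cc om z * r z) (at z)"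
    and dq: "\<And>z. z \<in> upper_sector a b \<Longrightarrow> (q has_field_derivative alph l mu z * q z + cc om z * s z) (at z)"
    and dr: "\<And>z. z \<in> upper_sector a b \<Longrightarrow> (r has_field_derivative cc om z * p z - alph l mu z * r z) (at z)"
    and ds: "\<And>z. z \<in> upper_sector a b \<Longrightarrow> (s has_field_derivative cc om z * q z) (at z)"
    and dP: "\<And>z. z \<in> upper_sector a b \<Longrightarrow> (P has_field_derivative cc om z * R z) (at z)"
    and dQ: "\<And>z. z \<in> upper_sector a b \<Longrightarrow> (Q has_field_derivative alph l mu z * Q z + cc om z * T z) (at z)"
    and dR: "\<And>z. z \<in> upper_sector a b \<Longrightarrow> (R has_field_derivative cc om z * P z - alph l mu z * R z) (at z)"
    and dT: "\<And>z. z \<in> upper_sector a b \<Longrightarrow> (T has_field_derivative cc om z * Q z) (at z)"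
    and lp: "(p \<longlongrightarrow> 1) (at 0 within upper_sector a b)"
    and lq: "(q \<longlongrightarrow> 0) (at 0 within upper_sector a b)"
    and lr: "(r \<longlongrightarrow> 0) (at 0 within upper_sector a b)"
    and ls: "(s \<longlongrightarrow> 1) (at 0 within upper_sector a b)"
    and lP: "(P \<longlongrightarrow> 1) (at 0 within upper_sector a b)"
    and lQ: "(Q \<longlongrightarrow> 0) (at 0 within upper_sector a b)"
    and lR: "(R \<longlongrightarrow> 0) (at 0 within upper_sector a b)"
    and lT: "(T \<longlongrightarrow> 1) (at 0 within upper_sector a b)"
    and z: "z \<in> upper_sector a b"
  shows "P z = p z \<and> Q z = q z \<and> R z = r z \<and> T z = s z"
proof -
  have D11: "((\<lambda>x. s x * P x - q x * R x) has_field_derivative 0) (at y)" if y: "y \<in> upper_sector a b" for y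
    using DERIV_diff[OF DERIV_mult[OF ds[OF y] dP[OF y]] DERIV_mult[OF dq[OF y] dR[OF y]]]
    by (rule DERIV_cong) (simp add: algebra_simps)
  have L11: "((\<lambda>x. s x * P x - q x * R x) \<longlongrightarrow> 1) (at 0 within upper_sector a b)"
    using tendsto_diff[OF tendsto_mult[OF ls lP] tendsto_mult[OF lq lR]] by simp
  have g11: "s z * P z - q z * R z = 1"
    using zero_deriv_lim[where f="\<lambda>x. s x * P x - q x * R x", OF a(1,3) D11 L11 z] by simp
  have D22: "((\<lambda>x. p x * T x - r x * Q x) has_field_derivative 0) (at y)" if y: "y \<in> upper_sector a b" for y
    using DERIV_diff[OF DERIV_mult[OF dp[OF y] dT[OF y]] DERIV_mult[OF dr[OF y] dQ[OF y]]]
    by (rule DERIV_cong) (simp add: algebra_simps)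
  have L22: "((\<lambda>x. p x * T x - r x * Q x) \<longlongrightarrow> 1) (at 0 within upper_sector a b)"
    using tendsto_diff[OF tendsto_mult[OF lp lT] tendsto_mult[OF lr lQ]] by simp
  have g22: "p z * T z - r z * Q z = 1"
    using zero_deriv_lim[where f="\<lambda>x. p x * T x - r x * Q x", OF a(1,3) D22 L22 z] by simp
  have Dd: "((\<lambda>x. p x * s x - q x * r x) has_field_derivative 0) (at y)" if y: "y \<in> upper_sector a b" for y
    using DERIV_diff[OF DERIV_mult[OF dp[OF y] ds[OF y]] DERIV_mult[OF dq[OF y] dr[OF y]]]
    by (rule DERIV_cong) (simp add: algebra_simps)
  have Ld: "((\<lambda>x. p x * s x - q x * r x) \<longlongrightarrow> 1) (at 0 within upper_sector a b)"
    using tendsto_diff[OF tendsto_mult[OF lp ls] tendsto_mult[OF lq lr]] by simp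
  have dd: "p z * s z - q z * r z = 1"
    using zero_deriv_lim[where f="\<lambda>x. p x * s x - q x * r x", OF a(1,3) Dd Ld z] by simp
  have D12: "((\<lambda>x. s x * Q x - q x * T x) has_field_derivative alph l mu y * (s y * Q y - q y * T y)) (at y)"
    if y: "y \<in> upper_sector a b" for y
    using DERIV_diff[OF DERIV_mult[OF ds[OF y] dQ[OF y]] DERIV_mult[OF dq[OF y] dT[OF y]]]
    by (rule DERIV_cong) (simp add: algebra_simps)
  have L12: "((\<lambda>x. s x * Q x - q x * T x) \<longlongrightarrow> 0) (at 0 within upper_sector a b)"
    using tendsto_diff[OF tendsto_mult[OF ls lQ] tendsto_mult[OF lq lT]] by simp
  have g12: "s z * Q z - q z * T z = 0"
    using ode_zero1[where g="\<lambda>x. s x * Q x - q x * T x", OF a l mu D12 L12 z] by simp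
  have D21: "((\<lambda>x. p x * R x - r x * P x) has_field_derivative - alph l mu y * (p y * R y - r y * P y)) (at y)"
    if y: "y \<in> upper_sector a b" for y
    using DERIV_diff[OF DERIV_mult[OF dp[OF y] dR[OF y]] DERIV_mult[OF dr[OF y] dP[OF y]]]
    by (rule DERIV_cong) (simp add: algebra_simps)
  have L21: "((\<lambda>x. p x * R x - r x * P x) \<longlongrightarrow> 0) (at 0 within upper_sector a b)"
    using tendsto_diff[OF tendsto_mult[OF lp lR] tendsto_mult[OF lr lP]] by simp
  have g21: "p z * R z - r z * P z = 0"
    using ode_zero2[where g="\<lambda>x. p x * R x - r x * P x", OF a l mu D21 L21 z] by simp
  have "P z = P z * (p z * s z - q z * r z)" using dd by simp
  also have "\<dots> = p z * (s z * P z - q z * R z) + q z * (p z * R z - r z * P z)" by (simp add: algebra_simps)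
  finally have 1: "P z = p z" using g11 g21 by simp
  have "Q z = Q z * (p z * s z - q z * r z)" using dd by simp
  also have "\<dots> = p z * (s z * Q z - q z * T z) + q z * (p z * T z - r z * Q z)" by (simp add: algebra_simps)
  finally have 2: "Q z = q z" using g12 g22 by simp
  have "R z = R z * (p z * s z - q z * r z)" using dd by simp
  also have "\<dots> = r z * (s z * P z - q z * R z) + s z * (p z * R z - r z * P z)" by (simp add: algebra_simps)
  finally have 3: "R z = r z" using g11 g21 by simp
  have "T z = T z * (p z * s z - q z * r z)" using dd by simp
  also have "\<dots> = r z * (s z * Q z - q z * T z) + s z * (p z * T z - r z * Q z)" by (simp add: algebra_simps)
  finally have 4: "T z = s z" using g12 g22 by simp
  show ?thesis using 1 2 3 4 by simp
qed

lemma exp_log_plus: "z \<noteq> 0 \<Longrightarrow> exp (log_plus z) = z"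
proof -
  assume z: "z \<noteq> 0"
  have "exp (\<i> * complex_of_real (pi / 2)) = \<i>"
    by (metis cis_conv_exp cis_pi_half)
  moreover have "\<i> * z * \<i> = - z" by (metis complex_i_mult_minus mult.commute)
  ultimately show ?thesis using z unfolding log_plus_def by (simp add: exp_add)
qed

lemma exp_log_minus: "z \<noteq> 0 \<Longrightarrow> exp (log_minus z) = z"
proof -
  assume z: "z \<noteq> 0"
  have e3: "pi + pi / 2 = 3 * pi / 2" by simp
  have "cis (3 * pi / 2) = cis pi * cis (pi / 2)" unfolding cis_mult e3 ..
  also have "\<dots> = - \<i>" by (simp only: cis_pi cis_pi_half) simp
  finally have "cis (3 * pi / 2) = - \<i>" .
  then have "exp (\<i> * complex_of_real (3 * pi / 2)) = - \<i>"
    by (metis cis_conv_exp)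
  moreover have "\<i> * z * - \<i> = z" by (metis complex_i_mult_minus mult.commute minus_mult_right minus_minus)
  ultimately show ?thesis using z unfolding log_minus_def by (simp add: exp_add)
qed

lemma F11_cnj:
  assumes z: "z \<noteq> 0" and l: "l \<in> \<int>"
  shows "cnj (F11 l mu log_plus z) = F11 l mu log_minus (cnj z)"
proof -
  have "exp (cnj (log_plus z)) = exp (log_minus (cnj z))"
    using z by (simp add: exp_cnj[symmetric] exp_log_plus exp_log_minus)
  then obtain n :: int where n: "cnj (log_plus z) = log_minus (cnj z) + of_int (2 * n) * pi * \<i>"
    unfolding exp_eq by blast
  obtain k :: int where k: "l = of_int k" using l by (auto elim: Ints_cases)
  have "exp (- of_real l * cnj (log_plus z)) =
        exp (- of_real l * log_minus (cnj z)) * exp ((2 * of_int (- k * n) * pi) * \<i>)"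
    unfolding n k by (simp add: exp_add[symmetric] algebra_simps)
  also have "exp ((2 * of_int (- k * n) * pi) * \<i>) = 1"
    by (rule exp_integer_2pi) simp
  finally have e: "exp (- of_real l * cnj (log_plus z)) = exp (- of_real l * log_minus (cnj z))" by simp
  show ?thesis unfolding F11_def using e by (simp add: exp_cnj)
qed

lemma entries:
  fixes M :: "complex^2^2"
  shows "(sysA l mu om z ** M - M ** sysB l mu z) $ 1 $ 1 = cc om z * M $ 2 $ 1"
    "(sysA l mu om z ** M - M ** sysB l mu z) $ 1 $ 2 = alph l mu z * M $ 1 $ 2 + cc om z * M $ 2 $ 2"
    "(sysA l mu om z ** M - M ** sysB l mu z) $ 2 $ 1 = cc om z * M $ 1 $ 1 - alph l mu z * M $ 2 $ 1"
    "(sysA l mu om z ** M - M ** sysB l mu z) $ 2 $ 2 = cc om z * M $ 1 $ 2"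
  by (simp_all add: sysA_def sysB_def matrix_matrix_mult_def sum_2 alph_def cc_def algebra_simps)

lemma cnj_alph: "cnj (alph l mu (cnj z)) = alph l mu z"
  by (simp add: alph_def)

lemma cnj_cc: "cnj (cc om (cnj z)) = - cc om z"
  by (simp add: cc_def)

lemma deriv_cc:
  assumes "(f has_field_derivative D) (at (cnj z))"
  shows "((\<lambda>x. cnj (f (cnj x))) has_field_derivative cnj D) (at z)"
  using has_field_derivative_cnj_cnj[OF assms] by (simp add: o_def)

lemma filt_cnj: "filterlim cnj (at 0 within cnj ` S) (at 0 within S)"
proof (rule filterlim_at_withinI)
  show "(cnj \<longlongrightarrow> 0) (at 0 within S)"
    using tendsto_cnj[OF tendsto_ident_at[of 0 S]] by simp
  show "\<forall>\<^sub>F x in at 0 within S. cnj x \<in> cnj ` S - {0}"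
    unfolding eventually_at_filter by (intro always_eventually) auto
qed

lemma mat1: "(mat 1 :: complex^2^2) $ 1 $ 1 = 1" "(mat 1 :: complex^2^2) $ 1 $ 2 = 0"
   "(mat 1 :: complex^2^2) $ 2 $ 1 = 0" "(mat 1 :: complex^2^2) $ 2 $ 2 = 1"
  by (simp_all add: mat_def)

theorem mainTheorem4:
  fixes omega l mu a b :: real
    and Hp Hm :: "complex \<Rightarrow> complex^2^2"
  assumes "omega > 0" and "l \<ge> 0" and "mu > 0"
    and "0 < a" and "a < pi / 2" and "0 < b" and "b < pi / 2"
    and "is_normalizing_H l mu omega (upper_sector a b) Hp"
    and "is_normalizing_H l mu omega (cnj ` upper_sector a b) Hm"
  shows "(\<forall>z\<in>cnj ` upper_sector a b. Jstar (col2 Hp) z = col2 Hm z)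
       \<and> (\<forall>z\<in>upper_sector a b. Jstar (col2 Hm) z = col2 Hp z)
       \<and> (l \<in> \<int> \<longrightarrow>
            (\<forall>z\<in>cnj ` upper_sector a b.
                Jstar (col1 l mu log_plus Hp) z = - col1 l mu log_minus Hm z)
          \<and> (\<forall>z\<in>upper_sector a b.
                Jstar (col1 l mu log_minus Hm) z = - col1 l mu log_plus Hp z))"
proof -
  let ?S = "upper_sector a b"
  have a: "0<a" "a<pi/2" "0<b" "b<pi/2" using assms by auto
  have Hpd: "\<And>z i j. z \<in> ?S \<Longrightarrow> ((\<lambda>x. Hp x $ i $ j) has_field_derivative
      ((sysA l mu omega z ** Hp z - Hp z ** sysB l mu z) $ i $ j)) (at z)"
    and Hpl: "(Hp \<longlongrightarrow> mat 1) (at 0 within ?S)"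
    using assms(8) unfolding is_normalizing_H_def by auto
  have Hmd: "\<And>z i j. z \<in> cnj ` ?S \<Longrightarrow> ((\<lambda>x. Hm x $ i $ j) has_field_derivative
      ((sysA l mu omega z ** Hm z - Hm z ** sysB l mu z) $ i $ j)) (at z)"
    and Hml: "(Hm \<longlongrightarrow> mat 1) (at 0 within cnj ` ?S)"
    using assms(9) unfolding is_normalizing_H_def by auto
  have Hpl': "((\<lambda>x. Hp x $ i $ j) \<longlongrightarrow> mat 1 $ i $ j) (at 0 within ?S)" for i j
    by (intro tendsto_vec_nth Hpl)
  have Hml': "((\<lambda>x. cnj (Hm (cnj x) $ i $ j)) \<longlongrightarrow> cnj (mat 1 $ i $ j)) (at 0 within ?S)" for i j
    by (intro tendsto_cnj filterlim_compose[OF tendsto_vec_nth[OF tendsto_vec_nth[OF Hml]] filt_cnj])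
  have Hmd': "((\<lambda>x. cnj (Hm (cnj x) $ i $ j)) has_field_derivative
      cnj ((sysA l mu omega (cnj z) ** Hm (cnj z) - Hm (cnj z) ** sysB l mu (cnj z)) $ i $ j)) (at z)"
    if z: "z \<in> ?S" for z i j
    by (rule deriv_cc, rule Hmd) (use z in auto)
  have main: "cnj (Hm (cnj z) $ 1 $ 1) = Hp z $ 1 $ 1 \<and> - cnj (Hm (cnj z) $ 1 $ 2) = Hp z $ 1 $ 2
      \<and> - cnj (Hm (cnj z) $ 2 $ 1) = Hp z $ 2 $ 1 \<and> cnj (Hm (cnj z) $ 2 $ 2) = Hp z $ 2 $ 2"
    if z: "z \<in> ?S" for z
  proof (rule uniq_scalar[where om=omega and l=l and mu=mu
      and p="\<lambda>x. Hp x $ 1 $ 1" and q="\<lambda>x. Hp x $ 1 $ 2" and r="\<lambda>x. Hp x $ 2 $ 1" and s="\<lambda>x. Hp x $ 2 $ 2"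
      and P="\<lambda>x. cnj (Hm (cnj x) $ 1 $ 1)" and Q="\<lambda>x. - cnj (Hm (cnj x) $ 1 $ 2)"
      and R="\<lambda>x. - cnj (Hm (cnj x) $ 2 $ 1)" and T="\<lambda>x. cnj (Hm (cnj x) $ 2 $ 2)", OF a assms(2,3)])
    fix y assume y: "y \<in> ?S"
    show "((\<lambda>x. Hp x $ 1 $ 1) has_field_derivative cc omega y * Hp y $ 2 $ 1) (at y)"
      using Hpd[OF y, of 1 1] by (simp only: entries)
    show "((\<lambda>x. Hp x $ 1 $ 2) has_field_derivative alph l mu y * Hp y $ 1 $ 2 + cc omega y * Hp y $ 2 $ 2) (at y)"
      using Hpd[OF y, of 1 2] by (simp only: entries)
    show "((\<lambda>x. Hp x $ 2 $ 1) has_field_derivative cc omega y * Hp y $ 1 $ 1 - alph l mu y * Hp y $ 2 $ 1) (at y)"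
      using Hpd[OF y, of 2 1] by (simp only: entries)
    show "((\<lambda>x. Hp x $ 2 $ 2) has_field_derivative cc omega y * Hp y $ 1 $ 2) (at y)"
      using Hpd[OF y, of 2 2] by (simp only: entries)
    show "((\<lambda>x. cnj (Hm (cnj x) $ 1 $ 1)) has_field_derivative cc omega y * - cnj (Hm (cnj y) $ 2 $ 1)) (at y)"
      using Hmd'[OF y, of 1 1] by (rule DERIV_cong) (simp only: entries, simp add: cnj_cc)
    show "((\<lambda>x. - cnj (Hm (cnj x) $ 1 $ 2)) has_field_derivative alph l mu y * - cnj (Hm (cnj y) $ 1 $ 2)
           + cc omega y * cnj (Hm (cnj y) $ 2 $ 2)) (at y)"
      using DERIV_minus[OF Hmd'[OF y, of 1 2]] by (rule DERIV_cong) (simp only: entries, simp add: cnj_cc cnj_alph)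
    show "((\<lambda>x. - cnj (Hm (cnj x) $ 2 $ 1)) has_field_derivative cc omega y * cnj (Hm (cnj y) $ 1 $ 1)
           - alph l mu y * - cnj (Hm (cnj y) $ 2 $ 1)) (at y)"
      using DERIV_minus[OF Hmd'[OF y, of 2 1]] by (rule DERIV_cong) (simp only: entries, simp add: cnj_cc cnj_alph)
    show "((\<lambda>x. cnj (Hm (cnj x) $ 2 $ 2)) has_field_derivative cc omega y * - cnj (Hm (cnj y) $ 1 $ 2)) (at y)"
      using Hmd'[OF y, of 2 2] by (rule DERIV_cong) (simp only: entries, simp add: cnj_cc)
  next
    show "((\<lambda>x. Hp x $ 1 $ 1) \<longlongrightarrow> 1) (at 0 within ?S)" using Hpl'[of 1 1] by (simp add: mat1)
    show "((\<lambda>x. Hp x $ 1 $ 2) \<longlongrightarrow> 0) (at 0 within ?S)" using Hpl'[of 1 2] by (simp add: mat1)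
    show "((\<lambda>x. Hp x $ 2 $ 1) \<longlongrightarrow> 0) (at 0 within ?S)" using Hpl'[of 2 1] by (simp add: mat1)
    show "((\<lambda>x. Hp x $ 2 $ 2) \<longlongrightarrow> 1) (at 0 within ?S)" using Hpl'[of 2 2] by (simp add: mat1)
    show "((\<lambda>x. cnj (Hm (cnj x) $ 1 $ 1)) \<longlongrightarrow> 1) (at 0 within ?S)" using Hml'[of 1 1] by (simp add: mat1)
    show "((\<lambda>x. - cnj (Hm (cnj x) $ 1 $ 2)) \<longlongrightarrow> 0) (at 0 within ?S)"
      using tendsto_minus[OF Hml'[of 1 2]] by (simp add: mat1)
    show "((\<lambda>x. - cnj (Hm (cnj x) $ 2 $ 1)) \<longlongrightarrow> 0) (at 0 within ?S)"
      using tendsto_minus[OF Hml'[of 2 1]] by (simp add: mat1)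
    show "((\<lambda>x. cnj (Hm (cnj x) $ 2 $ 2)) \<longlongrightarrow> 1) (at 0 within ?S)" using Hml'[of 2 2] by (simp add: mat1)
  qed (rule z)
  have nz: "z \<noteq> 0" if "z \<in> ?S" for z using that unfolding upper_sector_def by auto
  have c1: "\<forall>z\<in>cnj ` ?S. Jstar (col2 Hp) z = col2 Hm z"
  proof
    fix z assume "z \<in> cnj ` ?S"
    then obtain w where w: "w \<in> ?S" "z = cnj w" by blast
    have m: "Hp w $ 1 $ 2 = - cnj (Hm (cnj w) $ 1 $ 2)" "Hp w $ 2 $ 2 = cnj (Hm (cnj w) $ 2 $ 2)"
      using main[OF w(1)] by auto
    show "Jstar (col2 Hp) z = col2 Hm z"
      unfolding w(2) Jstar_def col2_def by (simp add: m)
  qed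
  have c2: "\<forall>z\<in>?S. Jstar (col2 Hm) z = col2 Hp z"
  proof
    fix z assume z: "z \<in> ?S"
    show "Jstar (col2 Hm) z = col2 Hp z"
      using main[OF z] unfolding Jstar_def col2_def by simp
  qed
  have c3: "\<forall>z\<in>cnj ` ?S. Jstar (col1 l mu log_plus Hp) z = - col1 l mu log_minus Hm z"
    if l: "l \<in> \<int>"
  proof
    fix z assume "z \<in> cnj ` ?S"
    then obtain w where w: "w \<in> ?S" "z = cnj w" by blast
    have F: "cnj (F11 l mu log_plus w) = F11 l mu log_minus z"
      using F11_cnj[OF nz[OF w(1)] l] w(2) by simp
    have m: "Hp w $ 1 $ 1 = cnj (Hm (cnj w) $ 1 $ 1)" "Hp w $ 2 $ 1 = - cnj (Hm (cnj w) $ 2 $ 1)"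
      using main[OF w(1)] by auto
    show "Jstar (col1 l mu log_plus Hp) z = - col1 l mu log_minus Hm z"
      unfolding Jstar_def col1_def w(2) using F w(2) by (simp add: m)
  qed
  have c4: "\<forall>z\<in>?S. Jstar (col1 l mu log_minus Hm) z = - col1 l mu log_plus Hp z"
    if l: "l \<in> \<int>"
  proof
    fix z assume z: "z \<in> ?S"
    have F: "cnj (F11 l mu log_minus (cnj z)) = F11 l mu log_plus z"
      using arg_cong[OF F11_cnj[OF nz[OF z] l], of cnj] by simp
    have m: "Hp z $ 1 $ 1 = cnj (Hm (cnj z) $ 1 $ 1)" "Hp z $ 2 $ 1 = - cnj (Hm (cnj z) $ 2 $ 1)"
      using main[OF z] by auto
    show "Jstar (col1 l mu log_minus Hm) z = - col1 l mu log_plus Hp z"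
      unfolding Jstar_def col1_def using F by (simp add: m)
  qed
  show ?thesis using c1 c2 c3 c4 by blast
qed

end
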